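(* Let $S_n$ act on $V=\mathbb{C}^n$ by its natural permutation representation, and let $\alpha,\beta$ be $S_n$-invariant $2$-cochains with $\beta$ linear and $\alpha$ linear or constant. Let $g\in S_n$ have a factorization $g=xy$, let $K=Z(x)\cap Z(y)$, and let $H$ be a subgroup of $Z(g)$ normalized by $K$. Let $\mathcal{B}$ be the set of all three-element subsets of $\{e_1,\dots,e_n\}$ and $\mathcal{B}_H$ a set of representatives of the $H$-orbits on $\mathcal{B}$. If $$\sum_{(x',y')\in{}^{H}(x,y)}\phi_{x',y'}(e_i,e_j,e_k)=0\quad\text{for all }\{e_i,e_j,e_k\}\in\mathcal{B}_H,$$ then $$\sum_{(x',y')\in{}^{Z(g)}(x,y)}\phi_{x',y'}(e_i,e_j,e_k)=0\quad\text{for all }\{e_i,e_j,e_k\}\in\mathcal{B}.$$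
   Context: $S_n$ acts by $\sigma e_i=e_{\sigma(i)}$. A linear (resp. constant) 2-cochain is $\alpha=\sum_g\alpha_gg$ with $\alpha_g:\bigwedge^2V\to V$ (resp. $\to\mathbb{C}$); it is $S_n$-invariant if $h(\alpha_g(v,w))=\alpha_{hgh^{-1}}(hv,hw)$. For $x,y\in S_n$, $\phi_{x,y}(v_1,v_2,v_3)=\alpha_x(v_1+yv_1,\beta_y(v_2,v_3))+\alpha_x(v_2+yv_2,\beta_y(v_3,v_1))+\alpha_x(v_3+yv_3,\beta_y(v_1,v_2))$, an alternating trilinear map. $Z(\cdot)$ is the centralizer; for $S\subseteq S_n$, ${}^{S}(x,y)=\{(sxs^{-1},sys^{-1}):s\in S\}$. *)

theory Defs
  imports "HOL-Analysis.Analysis"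
begin

text \<open>S_n is the group of permutations of the finite index type 'n (so n = CARD('n)),
  acting on V = complex^'n by sigma e_i = e_(sigma i); group product is composition.\<close>

definition Sn :: "('n::finite \<Rightarrow> 'n) set" where
  "Sn = {s. s permutes (UNIV :: 'n set)}"

definition pact :: "('n::finite \<Rightarrow> 'n) \<Rightarrow> complex ^ 'n \<Rightarrow> complex ^ 'n" where
  "pact s v = (\<chi> j. v $ (inv s j))"

definition basis_vec :: "'n::finite \<Rightarrow> complex ^ 'n" where
  "basis_vec i = axis i 1"

definition cochain2 ::
  "(complex \<Rightarrow> 'w::ab_group_add \<Rightarrow> 'w) \<Rightarrow> (('n::finite \<Rightarrow> 'n) \<Rightarrow> complex^'n \<Rightarrow> complex^'n \<Rightarrow> 'w) \<Rightarrow> bool" where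
  "cochain2 sm a \<longleftrightarrow> (\<forall>g\<in>Sn.
      (\<forall>u v w. a g (u + v) w = a g u w + a g v w) \<and>
      (\<forall>c v w. a g (c *s v) w = sm c (a g v w)) \<and>
      (\<forall>v. a g v v = 0))"

definition invariant2 ::
  "(('n::finite \<Rightarrow> 'n) \<Rightarrow> 'w \<Rightarrow> 'w) \<Rightarrow> (('n \<Rightarrow> 'n) \<Rightarrow> complex^'n \<Rightarrow> complex^'n \<Rightarrow> 'w) \<Rightarrow> bool" where
  "invariant2 act a \<longleftrightarrow> (\<forall>h\<in>Sn. \<forall>g\<in>Sn. \<forall>v w.
      act h (a g v w) = a (h \<circ> g \<circ> inv h) (pact h v) (pact h w))"

definition linear_cochain :: "(('n::finite \<Rightarrow> 'n) \<Rightarrow> complex^'n \<Rightarrow> complex^'n \<Rightarrow> complex^'n) \<Rightarrow> bool" where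
  "linear_cochain a \<longleftrightarrow> cochain2 (*s) a"

definition const_cochain :: "(('n::finite \<Rightarrow> 'n) \<Rightarrow> complex^'n \<Rightarrow> complex^'n \<Rightarrow> complex) \<Rightarrow> bool" where
  "const_cochain a \<longleftrightarrow> cochain2 (*) a"

definition invariant_linear :: "(('n::finite \<Rightarrow> 'n) \<Rightarrow> complex^'n \<Rightarrow> complex^'n \<Rightarrow> complex^'n) \<Rightarrow> bool" where
  "invariant_linear a \<longleftrightarrow> invariant2 pact a"

definition invariant_const :: "(('n::finite \<Rightarrow> 'n) \<Rightarrow> complex^'n \<Rightarrow> complex^'n \<Rightarrow> complex) \<Rightarrow> bool" where
  "invariant_const a \<longleftrightarrow> invariant2 (\<lambda>h z. z) a"

definition phi ::
  "(('n::finite \<Rightarrow> 'n) \<Rightarrow> complex^'n \<Rightarrow> complex^'n \<Rightarrow> 'w::ab_group_add) \<Rightarrow>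
   (('n \<Rightarrow> 'n) \<Rightarrow> complex^'n \<Rightarrow> complex^'n \<Rightarrow> complex^'n) \<Rightarrow>
   ('n \<Rightarrow> 'n) \<Rightarrow> ('n \<Rightarrow> 'n) \<Rightarrow> complex^'n \<Rightarrow> complex^'n \<Rightarrow> complex^'n \<Rightarrow> 'w" where
  "phi a b x y v1 v2 v3 =
     a x (v1 + pact y v1) (b y v2 v3) + a x (v2 + pact y v2) (b y v3 v1) + a x (v3 + pact y v3) (b y v1 v2)"

definition centralizer :: "('n::finite \<Rightarrow> 'n) \<Rightarrow> ('n \<Rightarrow> 'n) set" where
  "centralizer x = {s \<in> Sn. s \<circ> x = x \<circ> s}"

definition conj_pairs :: "('n::finite \<Rightarrow> 'n) set \<Rightarrow> ('n \<Rightarrow> 'n) \<Rightarrow> ('n \<Rightarrow> 'n) \<Rightarrow> (('n \<Rightarrow> 'n) \<times> ('n \<Rightarrow> 'n)) set" where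
  "conj_pairs S x y = {(s \<circ> x \<circ> inv s, s \<circ> y \<circ> inv s) | s. s \<in> S}"

definition orbit_sum ::
  "(('n::finite \<Rightarrow> 'n) \<Rightarrow> complex^'n \<Rightarrow> complex^'n \<Rightarrow> 'w::ab_group_add) \<Rightarrow>
   (('n \<Rightarrow> 'n) \<Rightarrow> complex^'n \<Rightarrow> complex^'n \<Rightarrow> complex^'n) \<Rightarrow>
   ('n \<Rightarrow> 'n) set \<Rightarrow> ('n \<Rightarrow> 'n) \<Rightarrow> ('n \<Rightarrow> 'n) \<Rightarrow> 'n \<Rightarrow> 'n \<Rightarrow> 'n \<Rightarrow> 'w" where
  "orbit_sum a b S x y i j k =
     (\<Sum>(x', y') \<in> conj_pairs S x y. phi a b x' y' (basis_vec i) (basis_vec j) (basis_vec k))"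

definition is_subgroup_Sn :: "('n::finite \<Rightarrow> 'n) set \<Rightarrow> bool" where
  "is_subgroup_Sn H \<longleftrightarrow> H \<subseteq> Sn \<and> id \<in> H \<and> (\<forall>a\<in>H. \<forall>b\<in>H. a \<circ> b \<in> H) \<and> (\<forall>a\<in>H. inv a \<in> H)"

text \<open>B: 3-element subsets of the basis, identified with 3-element index sets.\<close>
definition triples :: "'n::finite set set" where
  "triples = {T. card T = 3}"

definition orbit_reps :: "('n::finite \<Rightarrow> 'n) set \<Rightarrow> 'n set set \<Rightarrow> bool" where
  "orbit_reps H R \<longleftrightarrow> R \<subseteq> triples \<and> (\<forall>T\<in>triples. \<exists>!r. r \<in> R \<and> (\<exists>h\<in>H. T = h ` r))"

end

theory Submission
  imports Defs
begin

lemma Sn_perm: "s \<in> Sn \<Longrightarrow> s permutes UNIV" by (simp add: Sn_def)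
lemma Sn_comp: "s \<in> Sn \<Longrightarrow> t \<in> Sn \<Longrightarrow> s \<circ> t \<in> Sn"
  by (simp add: Sn_def permutes_compose)
lemma Sn_inv: "s \<in> Sn \<Longrightarrow> inv s \<in> Sn"
  by (simp add: Sn_def permutes_inv)
lemma Sn_bij: "s \<in> Sn \<Longrightarrow> bij s"
  by (simp add: Sn_def permutes_bij)

lemma Sn_conj: "s \<in> Sn \<Longrightarrow> z \<in> Sn \<Longrightarrow> s \<circ> z \<circ> inv s \<in> Sn"
  by (simp add: Sn_comp Sn_inv)

lemma cj_comp: "s \<in> Sn \<Longrightarrow> t \<in> Sn \<Longrightarrow>
   (s \<circ> t) \<circ> z \<circ> inv (s \<circ> t) = s \<circ> (t \<circ> z \<circ> inv t) \<circ> inv s"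
  by (simp add: o_inv_distrib Sn_bij o_assoc)

lemma pact_comp: "a \<in> Sn \<Longrightarrow> b \<in> Sn \<Longrightarrow> pact a (pact b v) = pact (a \<circ> b) v"
  by (simp add: pact_def vec_eq_iff o_inv_distrib Sn_bij)

lemma pact_add: "pact a (u + v) = pact a u + pact a v"
  by (simp add: pact_def vec_eq_iff)

lemma pact_basis: "a \<in> Sn \<Longrightarrow> pact a (basis_vec i) = basis_vec (a i)"
  using permutes_inverses[OF Sn_perm[of a]]
  by (auto simp add: pact_def vec_eq_iff basis_vec_def axis_def)

lemma phi_equiv:
  fixes \<alpha> :: "('n::finite \<Rightarrow> 'n) \<Rightarrow> complex^'n \<Rightarrow> complex^'n \<Rightarrow> 'w::ab_group_add"
  assumes ia: "invariant2 act \<alpha>" and ib: "invariant_linear \<beta>"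
    and add: "\<And>a b. act t (a + b) = act t a + act t b"
    and t: "t \<in> Sn" and x: "x \<in> Sn" and y: "y \<in> Sn"
  shows "phi \<alpha> \<beta> (t \<circ> x \<circ> inv t) (t \<circ> y \<circ> inv t) (pact t v1) (pact t v2) (pact t v3)
       = act t (phi \<alpha> \<beta> x y v1 v2 v3)"
proof -
  have py: "pact (t \<circ> y \<circ> inv t) (pact t v) = pact t (pact y v)" for v
  proof -
    have "(t \<circ> y \<circ> inv t) \<circ> t = t \<circ> y"
      using permutes_inv_o(2)[OF Sn_perm[OF t]] by (simp add: o_assoc[symmetric])
    then show ?thesis using t y
      by (simp add: pact_comp Sn_conj)
  qed
  have b: "\<beta> (t \<circ> y \<circ> inv t) (pact t v) (pact t w) = pact t (\<beta> y v w)" for v w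
    using ib t y unfolding invariant_linear_def invariant2_def by metis
  have a: "\<alpha> (t \<circ> x \<circ> inv t) (pact t v) (pact t w) = act t (\<alpha> x v w)" for v w
    using ia t x unfolding invariant2_def by metis
  show ?thesis
    unfolding phi_def py b pact_add[symmetric] a add ..
qed

definition grp :: "('n::finite \<Rightarrow> 'n) set \<Rightarrow> bool" where
  "grp G \<longleftrightarrow> G \<subseteq> Sn \<and> id \<in> G \<and> (\<forall>a\<in>G. \<forall>b\<in>G. a \<circ> b \<in> G) \<and> (\<forall>a\<in>G. inv a \<in> G)"

lemma inv_cancel1: "s \<in> Sn \<Longrightarrow> inv s \<circ> (s \<circ> u) = u"
  by (simp add: fun_eq_iff permutes_inverses[OF Sn_perm[of s]])
lemma inv_cancel2: "s \<in> Sn \<Longrightarrow> s \<circ> (inv s \<circ> u) = u"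
  by (simp add: fun_eq_iff permutes_inverses[OF Sn_perm[of s]])

lemma count_lemma:
  fixes f :: "('n::finite \<Rightarrow> 'n) \<times> ('n \<Rightarrow> 'n) \<Rightarrow> 'w::real_vector"
  assumes G: "grp G" and x: "x \<in> Sn" and y: "y \<in> Sn"
  defines "cp \<equiv> \<lambda>u. (u \<circ> x \<circ> inv u, u \<circ> y \<circ> inv u)"
  shows "(\<Sum>u\<in>G. f (cp u)) = real (card {u\<in>G. cp u = (x, y)}) *\<^sub>R (\<Sum>p\<in>conj_pairs G x y. f p)"
    and "card {u\<in>G. cp u = (x, y)} \<ge> 1"
proof -
  have GS: "G \<subseteq> Sn" and Gc: "\<And>a b. a \<in> G \<Longrightarrow> b \<in> G \<Longrightarrow> a \<circ> b \<in> G"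
    and Gi: "\<And>a. a \<in> G \<Longrightarrow> inv a \<in> G" and Gid: "id \<in> G"
    using G by (auto simp: grp_def)
  have cpc: "cp (s \<circ> u) = (s \<circ> fst (cp u) \<circ> inv s, s \<circ> snd (cp u) \<circ> inv s)"
    if "s \<in> Sn" "u \<in> Sn" for s u
    using cj_comp[OF that] by (simp add: cp_def)
  have cj_inv: "inv s \<circ> (s \<circ> z \<circ> inv s) \<circ> inv (inv s) = z" if "s \<in> Sn" for s z
  proof -
    have "inv (inv s) = s" using permutes_inv_inv[OF Sn_perm[OF that]] .
    then show ?thesis
      by (simp add: fun_eq_iff permutes_inverses[OF Sn_perm[OF that]])
  qed
  let ?Fix = "{u\<in>G. cp u = (x, y)}"
  have fib: "card {u\<in>G. cp u = cp s} = card ?Fix" if s: "s \<in> G" for s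
  proof -
    have sS: "s \<in> Sn" using s GS by auto
    have "bij_betw (\<lambda>u. s \<circ> u) ?Fix {u\<in>G. cp u = cp s}"
    proof (rule bij_betw_byWitness[where f'="\<lambda>t. inv s \<circ> t"])
      show "\<forall>a\<in>?Fix. inv s \<circ> (s \<circ> a) = a" using inv_cancel1[OF sS] by auto
      show "\<forall>a\<in>{u\<in>G. cp u = cp s}. s \<circ> (inv s \<circ> a) = a" using inv_cancel2[OF sS] by auto
      show "(\<circ>) s ` ?Fix \<subseteq> {u\<in>G. cp u = cp s}"
      proof
        fix t assume "t \<in> (\<circ>) s ` ?Fix"
        then obtain u where u: "u \<in> G" "cp u = (x,y)" "t = s \<circ> u" by auto
        have f1: "fst (cp u) = x" "snd (cp u) = y" using u(2) by auto
        have "cp t = (s \<circ> fst (cp u) \<circ> inv s, s \<circ> snd (cp u) \<circ> inv s)"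
          using cpc[OF sS, of u] GS u(1) u(3) by blast
        also have "\<dots> = cp s" unfolding f1 by (simp add: cp_def)
        finally show "t \<in> {u\<in>G. cp u = cp s}" using Gc[OF s u(1)] u(3) by simp
      qed
      show "(\<lambda>t. inv s \<circ> t) ` {u\<in>G. cp u = cp s} \<subseteq> ?Fix"
      proof
        fix t assume "t \<in> (\<lambda>t. inv s \<circ> t) ` {u\<in>G. cp u = cp s}"
        then obtain u where u: "u \<in> G" "cp u = cp s" "t = inv s \<circ> u" by auto
        have "cp t = (inv s \<circ> fst (cp u) \<circ> inv (inv s), inv s \<circ> snd (cp u) \<circ> inv (inv s))"
          using cpc[OF Sn_inv[OF sS], of u] u GS by auto
        also have "\<dots> = (x, y)"
        proof -
          have "fst (cp u) = s \<circ> x \<circ> inv s" "snd (cp u) = s \<circ> y \<circ> inv s"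
            using u(2) by (simp_all add: cp_def)
          then show ?thesis by (simp only: cj_inv[OF sS])
        qed
        moreover have "t \<in> G" using u(1,3) Gc Gi[OF s] by blast
        ultimately show "t \<in> ?Fix" by blast
      qed
    qed
    then show ?thesis by (simp add: bij_betw_same_card)
  qed
  have cpG: "conj_pairs G x y = cp ` G" by (auto simp: conj_pairs_def cp_def)
  have "(\<Sum>u\<in>G. f (cp u)) = (\<Sum>p\<in>cp ` G. \<Sum>u\<in>{u\<in>G. cp u = p}. f (cp u))"
    by (rule sum.image_gen) simp
  also have "\<dots> = (\<Sum>p\<in>cp ` G. real (card ?Fix) *\<^sub>R f p)"
  proof (rule sum.cong)
    fix p assume "p \<in> cp ` G"
    then obtain s where s: "s \<in> G" "p = cp s" by auto
    have "(\<Sum>u\<in>{u\<in>G. cp u = p}. f (cp u)) = (\<Sum>u\<in>{u\<in>G. cp u = p}. f p)"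
      by (rule sum.cong) auto
    also have "\<dots> = real (card ?Fix) *\<^sub>R f p" 
      using fib[OF s(1)] s(2) sum_constant_scaleR[of "f p" "{u\<in>G. cp u = p}"] by simp
    finally show "(\<Sum>u\<in>{u\<in>G. cp u = p}. f (cp u)) = real (card ?Fix) *\<^sub>R f p" .
  qed simp
  finally show "(\<Sum>u\<in>G. f (cp u)) = real (card ?Fix) *\<^sub>R (\<Sum>p\<in>conj_pairs G x y. f p)"
    by (simp add: cpG scaleR_sum_right)
  have "id \<in> ?Fix" using Gid by (simp add: cp_def)
  then show "card ?Fix \<ge> 1"
  proof -
    have "card ?Fix \<noteq> 0" using \<open>id \<in> ?Fix\<close> by (simp add: card_eq_0_iff) blast
    then show ?thesis by linarith
  qed
qed

lemma scale_zero_iff: "(n::nat) \<ge> 1 \<Longrightarrow> S = real n *\<^sub>R (Q::'w::real_vector) \<Longrightarrow> (S = 0 \<longleftrightarrow> Q = 0)"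
  by simp

lemma orbit_sum_count:
  fixes \<alpha> :: "('n::finite \<Rightarrow> 'n) \<Rightarrow> complex^'n \<Rightarrow> complex^'n \<Rightarrow> 'w::real_vector"
  assumes G: "grp G" and x: "x \<in> Sn" and y: "y \<in> Sn"
  shows "(\<Sum>u\<in>G. phi \<alpha> \<beta> (u \<circ> x \<circ> inv u) (u \<circ> y \<circ> inv u) (basis_vec a) (basis_vec b) (basis_vec c)) = 0
     \<longleftrightarrow> orbit_sum \<alpha> \<beta> G x y a b c = 0"
proof -
  define f where "f = (\<lambda>(x'::'n\<Rightarrow>'n, y'). phi \<alpha> \<beta> x' y' (basis_vec a) (basis_vec b) (basis_vec c))"
  note C = count_lemma(1)[OF G x y, where f=f] count_lemma(2)[OF G x y]
  have "(\<Sum>u\<in>G. phi \<alpha> \<beta> (u \<circ> x \<circ> inv u) (u \<circ> y \<circ> inv u) (basis_vec a) (basis_vec b) (basis_vec c))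
      = (\<Sum>u\<in>G. f (u \<circ> x \<circ> inv u, u \<circ> y \<circ> inv u))" by (simp add: f_def)
  also have "\<dots> = real (card {u \<in> G. (u \<circ> x \<circ> inv u, u \<circ> y \<circ> inv u) = (x, y)}) *\<^sub>R orbit_sum \<alpha> \<beta> G x y a b c"
    using C(1) by (simp add: orbit_sum_def f_def)
  finally show ?thesis using scale_zero_iff[OF C(2)] by blast
qed

lemma sum_shift:
  fixes \<alpha> :: "('n::finite \<Rightarrow> 'n) \<Rightarrow> complex^'n \<Rightarrow> complex^'n \<Rightarrow> 'w::ab_group_add"
  assumes ia: "invariant2 act \<alpha>" and ib: "invariant_linear \<beta>"
    and add: "\<And>a b. act t (a + b) = act t a + act t b"
    and t: "t \<in> Sn" and U: "U \<subseteq> Sn" and x: "x \<in> Sn" and y: "y \<in> Sn"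
  shows "(\<Sum>u\<in>U. phi \<alpha> \<beta> ((t \<circ> u) \<circ> x \<circ> inv (t \<circ> u)) ((t \<circ> u) \<circ> y \<circ> inv (t \<circ> u))
            (basis_vec (t a)) (basis_vec (t b)) (basis_vec (t c)))
       = act t (\<Sum>u\<in>U. phi \<alpha> \<beta> (u \<circ> x \<circ> inv u) (u \<circ> y \<circ> inv u) (basis_vec a) (basis_vec b) (basis_vec c))"
proof -
  have act0: "act t 0 = 0"
  proof -
    have "act t 0 + act t 0 = act t 0 + 0" using add[of 0 0] by simp
    then show ?thesis by simp
  qed
  have "(\<Sum>u\<in>U. phi \<alpha> \<beta> ((t \<circ> u) \<circ> x \<circ> inv (t \<circ> u)) ((t \<circ> u) \<circ> y \<circ> inv (t \<circ> u))
            (basis_vec (t a)) (basis_vec (t b)) (basis_vec (t c)))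
      = (\<Sum>u\<in>U. act t (phi \<alpha> \<beta> (u \<circ> x \<circ> inv u) (u \<circ> y \<circ> inv u) (basis_vec a) (basis_vec b) (basis_vec c)))"
  proof (rule sum.cong)
    fix u assume u: "u \<in> U"
    then have uS: "u \<in> Sn" using U by auto
    show "phi \<alpha> \<beta> ((t \<circ> u) \<circ> x \<circ> inv (t \<circ> u)) ((t \<circ> u) \<circ> y \<circ> inv (t \<circ> u))
            (basis_vec (t a)) (basis_vec (t b)) (basis_vec (t c))
        = act t (phi \<alpha> \<beta> (u \<circ> x \<circ> inv u) (u \<circ> y \<circ> inv u) (basis_vec a) (basis_vec b) (basis_vec c))"
      unfolding cj_comp[OF t uS] pact_basis[OF t, symmetric]
      by (rule phi_equiv[OF ia ib add t Sn_conj[OF uS x] Sn_conj[OF uS y]])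
  qed simp
  also have "\<dots> = act t (\<Sum>u\<in>U. phi \<alpha> \<beta> (u \<circ> x \<circ> inv u) (u \<circ> y \<circ> inv u) (basis_vec a) (basis_vec b) (basis_vec c))"
    using sum_comp_morphism[of "act t", OF act0 add] by (simp add: o_def)
  finally show ?thesis .
qed

lemma centralizer_grp: "grp (centralizer g)"
proof -
  have "inv s \<circ> g = g \<circ> inv s" if "s \<in> Sn" "s \<circ> g = g \<circ> s" for s
  proof -
    have "inv s (g w) = g (inv s w)" for w
    proof -
      have "s (g (inv s w)) = g (s (inv s w))" using fun_cong[OF that(2)] by simp
      then have "s (g (inv s w)) = g w" using permutes_inverses[OF Sn_perm[OF that(1)]] by simp
      then have "inv s (s (g (inv s w))) = inv s (g w)" by simp
      then show ?thesis using permutes_inverses[OF Sn_perm[OF that(1)]] by simp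
    qed
    then show ?thesis by (simp add: fun_eq_iff)
  qed
  moreover have "s \<circ> t \<circ> g = g \<circ> (s \<circ> t)" if "s \<circ> g = g \<circ> s" "t \<circ> g = g \<circ> t" for s t
    by (metis that o_assoc)
  ultimately show ?thesis
    by (auto simp: grp_def centralizer_def Sn_def permutes_id permutes_compose permutes_inv)
qed

lemma bij_left: assumes G: "grp G" and s: "s \<in> G" shows "bij_betw (\<lambda>u. s \<circ> u) G G"
proof -
  have sS: "s \<in> Sn" using G s by (auto simp: grp_def)
  show ?thesis
  proof (rule bij_betw_byWitness[where f'="\<lambda>t. inv s \<circ> t"])
    show "\<forall>a\<in>G. inv s \<circ> (s \<circ> a) = a" using inv_cancel1[OF sS] by blast
    show "\<forall>a\<in>G. s \<circ> (inv s \<circ> a) = a" using inv_cancel2[OF sS] by blast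
    show "(\<circ>) s ` G \<subseteq> G" using G s by (auto simp: grp_def)
    show "(\<lambda>t. inv s \<circ> t) ` G \<subseteq> G" using G s by (auto simp: grp_def)
  qed
qed

lemma bij_right: assumes G: "grp G" and s: "s \<in> G" shows "bij_betw (\<lambda>u. u \<circ> s) G G"
proof -
  have sS: "s \<in> Sn" using G s by (auto simp: grp_def)
  have c1: "(u \<circ> s) \<circ> inv s = u" "(u \<circ> inv s) \<circ> s = u" for u :: "'a \<Rightarrow> 'a"
    by (simp_all add: fun_eq_iff permutes_inverses[OF Sn_perm[OF sS]])
  show ?thesis
  proof (rule bij_betw_byWitness[where f'="\<lambda>t. t \<circ> inv s"])
    show "\<forall>a\<in>G. (a \<circ> s) \<circ> inv s = a" using c1 by blast
    show "\<forall>a\<in>G. (a \<circ> inv s) \<circ> s = a" using c1 by blast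
    show "(\<lambda>u. u \<circ> s) ` G \<subseteq> G" using G s by (auto simp: grp_def)
    show "(\<lambda>t. t \<circ> inv s) ` G \<subseteq> G" using G s by (auto simp: grp_def)
  qed
qed

lemma grp_card: "grp G \<Longrightarrow> card G \<ge> 1"
proof -
  assume "grp G"
  then have "id \<in> G" by (simp add: grp_def)
  then have "card G \<noteq> 0" by (simp add: card_eq_0_iff) blast
  then show ?thesis by linarith
qed

lemma main_gen:
  fixes \<alpha> :: "('n::finite \<Rightarrow> 'n) \<Rightarrow> complex^'n \<Rightarrow> complex^'n \<Rightarrow> 'w::real_vector"
  assumes ia: "invariant2 act \<alpha>" and ib: "invariant_linear \<beta>"
    and add: "\<And>t a b. t \<in> Sn \<Longrightarrow> act t (a + b) = act t a + act t b"
    and x: "x \<in> Sn" and y: "y \<in> Sn" and H: "is_subgroup_Sn H" and HZ: "H \<subseteq> centralizer g"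
    and R: "orbit_reps H R"
    and hyp: "\<forall>i j k. distinct [i, j, k] \<and> {i, j, k} \<in> R \<longrightarrow> orbit_sum \<alpha> \<beta> H x y i j k = 0"
  shows "\<forall>i j k. distinct [i, j, k] \<longrightarrow> orbit_sum \<alpha> \<beta> (centralizer g) x y i j k = 0"
proof -
  have gH: "grp H" using H by (simp add: grp_def is_subgroup_Sn_def)
  have HS: "H \<subseteq> Sn" using gH by (simp add: grp_def)
  have gZ: "grp (centralizer g)" by (rule centralizer_grp)
  have ZS: "centralizer g \<subseteq> Sn" using gZ by (simp add: grp_def)
  have act0: "act t 0 = 0" if "t \<in> Sn" for t
  proof -
    have "act t 0 + act t 0 = act t 0 + 0" using add[OF that, of 0 0] by simp
    then show ?thesis by simp
  qed
  have Hzero: "(\<Sum>u\<in>H. phi \<alpha> \<beta> (u \<circ> x \<circ> inv u) (u \<circ> y \<circ> inv u) (basis_vec a) (basis_vec b) (basis_vec c)) = 0"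
    if abc: "distinct [a, b, c]" for a b c
  proof -
    have "{a, b, c} \<in> triples" using abc by (simp add: triples_def)
    moreover have "\<forall>T\<in>triples. \<exists>!r. r \<in> R \<and> (\<exists>h\<in>H. T = h ` r)"
      using R unfolding orbit_reps_def by (rule conjunct2)
    ultimately have "\<exists>!r. r \<in> R \<and> (\<exists>h\<in>H. {a, b, c} = h ` r)" by (rule bspec[rotated])
    then have "\<exists>r. r \<in> R \<and> (\<exists>h\<in>H. {a, b, c} = h ` r)" by (rule ex1_implies_ex)
    then obtain r h0 where r: "r \<in> R" "h0 \<in> H" "{a, b, c} = h0 ` r" by blast
    have h0S: "h0 \<in> Sn" using r HS by auto
    note pi = permutes_inverses[OF Sn_perm[OF h0S]]
    define a' b' c' where "a' = inv h0 a" "b' = inv h0 b" "c' = inv h0 c"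
    have ha: "a = h0 a'" "b = h0 b'" "c = h0 c'" by (simp_all add: a'_b'_c'_def pi)
    have "h0 ` r = h0 ` {a', b', c'}" using r(3) ha by simp
    then have rr: "r = {a', b', c'}"
      by (simp only: inj_image_eq_iff[OF bij_is_inj[OF Sn_bij[OF h0S]]])
    have "distinct [a', b', c']" using abc unfolding ha by auto
    then have "orbit_sum \<alpha> \<beta> H x y a' b' c' = 0" using hyp r(1) unfolding rr by simp
    then have z: "(\<Sum>u\<in>H. phi \<alpha> \<beta> (u \<circ> x \<circ> inv u) (u \<circ> y \<circ> inv u) (basis_vec a') (basis_vec b') (basis_vec c')) = 0"
      using orbit_sum_count[OF gH x y] by blast
    have "(\<Sum>u\<in>H. phi \<alpha> \<beta> (u \<circ> x \<circ> inv u) (u \<circ> y \<circ> inv u) (basis_vec a) (basis_vec b) (basis_vec c))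
        = (\<Sum>u\<in>H. phi \<alpha> \<beta> ((h0 \<circ> u) \<circ> x \<circ> inv (h0 \<circ> u)) ((h0 \<circ> u) \<circ> y \<circ> inv (h0 \<circ> u))
             (basis_vec (h0 a')) (basis_vec (h0 b')) (basis_vec (h0 c')))"
      unfolding ha[symmetric]
      by (rule sum.reindex_bij_betw[OF bij_left[OF gH r(2)], symmetric])
    also have "\<dots> = act h0 (\<Sum>u\<in>H. phi \<alpha> \<beta> (u \<circ> x \<circ> inv u) (u \<circ> y \<circ> inv u) (basis_vec a') (basis_vec b') (basis_vec c'))"
      by (rule sum_shift[OF ia ib add[OF h0S] h0S HS x y])
    also have "\<dots> = 0" using z act0[OF h0S] by simp
    finally show ?thesis .
  qed
  show ?thesis
  proof (intro allI impI)
    fix i j k :: 'n assume ijk: "distinct [i, j, k]"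
    let ?Z = "centralizer g"
    let ?S = "(\<Sum>u\<in>?Z. phi \<alpha> \<beta> (u \<circ> x \<circ> inv u) (u \<circ> y \<circ> inv u) (basis_vec i) (basis_vec j) (basis_vec k))"
    have sh: "?S = (\<Sum>u\<in>?Z. phi \<alpha> \<beta> ((u \<circ> h) \<circ> x \<circ> inv (u \<circ> h)) ((u \<circ> h) \<circ> y \<circ> inv (u \<circ> h))
                     (basis_vec i) (basis_vec j) (basis_vec k))" if h: "h \<in> H" for h
      by (rule sum.reindex_bij_betw[OF bij_right[OF gZ], symmetric]) (use h HZ in auto)
    have "real (card H) *\<^sub>R ?S = (\<Sum>h\<in>H. ?S)" by (simp add: sum_constant_scaleR)
    also have "\<dots> = (\<Sum>h\<in>H. \<Sum>u\<in>?Z. phi \<alpha> \<beta> ((u \<circ> h) \<circ> x \<circ> inv (u \<circ> h)) ((u \<circ> h) \<circ> y \<circ> inv (u \<circ> h))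
                     (basis_vec i) (basis_vec j) (basis_vec k))"
      by (rule sum.cong[OF refl sh])
    also have "\<dots> = (\<Sum>u\<in>?Z. \<Sum>h\<in>H. phi \<alpha> \<beta> ((u \<circ> h) \<circ> x \<circ> inv (u \<circ> h)) ((u \<circ> h) \<circ> y \<circ> inv (u \<circ> h))
                     (basis_vec i) (basis_vec j) (basis_vec k))"
      by (rule sum.swap)
    also have "\<dots> = (\<Sum>u\<in>?Z. 0)"
    proof (rule sum.cong[OF refl])
      fix u assume u: "u \<in> ?Z"
      then have uS: "u \<in> Sn" using ZS by auto
      note pi = permutes_inverses[OF Sn_perm[OF uS]]
      have d: "distinct [inv u i, inv u j, inv u k]" using ijk pi by (metis distinct_length_2_or_more distinct_singleton)
      have "(\<Sum>h\<in>H. phi \<alpha> \<beta> ((u \<circ> h) \<circ> x \<circ> inv (u \<circ> h)) ((u \<circ> h) \<circ> y \<circ> inv (u \<circ> h))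
                     (basis_vec i) (basis_vec j) (basis_vec k))
          = (\<Sum>h\<in>H. phi \<alpha> \<beta> ((u \<circ> h) \<circ> x \<circ> inv (u \<circ> h)) ((u \<circ> h) \<circ> y \<circ> inv (u \<circ> h))
                     (basis_vec (u (inv u i))) (basis_vec (u (inv u j))) (basis_vec (u (inv u k))))"
        by (simp only: pi)
      also have "\<dots> = act u (\<Sum>h\<in>H. phi \<alpha> \<beta> (h \<circ> x \<circ> inv h) (h \<circ> y \<circ> inv h)
                     (basis_vec (inv u i)) (basis_vec (inv u j)) (basis_vec (inv u k)))"
        by (rule sum_shift[OF ia ib add[OF uS] uS HS x y])
      also have "\<dots> = 0" using Hzero[OF d] act0[OF uS] by simp
      finally show "(\<Sum>h\<in>H. phi \<alpha> \<beta> ((u \<circ> h) \<circ> x \<circ> inv (u \<circ> h)) ((u \<circ> h) \<circ> y \<circ> inv (u \<circ> h))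
                     (basis_vec i) (basis_vec j) (basis_vec k)) = 0" .
    qed
    also have "\<dots> = 0" by simp
    finally have "real (card H) *\<^sub>R ?S = 0" .
    then have "?S = 0" using scale_zero_iff[OF grp_card[OF gH], of "real (card H) *\<^sub>R ?S" ?S] by simp
    then show "orbit_sum \<alpha> \<beta> ?Z x y i j k = 0" using orbit_sum_count[OF gZ x y] by blast
  qed
qed

theorem lemma5p4:
  fixes \<beta> :: "('n::finite \<Rightarrow> 'n) \<Rightarrow> complex^'n \<Rightarrow> complex^'n \<Rightarrow> complex^'n"
    and x y g :: "'n \<Rightarrow> 'n"
    and H :: "('n \<Rightarrow> 'n) set"
    and R :: "'n set set"
  assumes beta: "linear_cochain \<beta>" "invariant_linear \<beta>"
    and xy: "x \<in> Sn" "y \<in> Sn" "g = x \<circ> y"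
    and H: "is_subgroup_Sn H" "H \<subseteq> centralizer g"
    and norm: "\<forall>k \<in> centralizer x \<inter> centralizer y. \<forall>h\<in>H. k \<circ> h \<circ> inv k \<in> H"
    and R: "orbit_reps H R"
  shows
   "(\<forall>\<alpha> :: ('n \<Rightarrow> 'n) \<Rightarrow> complex^'n \<Rightarrow> complex^'n \<Rightarrow> complex^'n.
       linear_cochain \<alpha> \<and> invariant_linear \<alpha> \<and>
       (\<forall>i j k. distinct [i, j, k] \<and> {i, j, k} \<in> R \<longrightarrow> orbit_sum \<alpha> \<beta> H x y i j k = 0)
       \<longrightarrow> (\<forall>i j k. distinct [i, j, k] \<longrightarrow> orbit_sum \<alpha> \<beta> (centralizer g) x y i j k = 0))
    \<and>
    (\<forall>\<alpha> :: ('n \<Rightarrow> 'n) \<Rightarrow> complex^'n \<Rightarrow> complex^'n \<Rightarrow> complex.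
       const_cochain \<alpha> \<and> invariant_const \<alpha> \<and>
       (\<forall>i j k. distinct [i, j, k] \<and> {i, j, k} \<in> R \<longrightarrow> orbit_sum \<alpha> \<beta> H x y i j k = 0)
       \<longrightarrow> (\<forall>i j k. distinct [i, j, k] \<longrightarrow> orbit_sum \<alpha> \<beta> (centralizer g) x y i j k = 0))"
proof (rule conjI; rule allI; rule impI)
  fix \<alpha> :: "('n \<Rightarrow> 'n) \<Rightarrow> complex^'n \<Rightarrow> complex^'n \<Rightarrow> complex^'n"
  assume A: "linear_cochain \<alpha> \<and> invariant_linear \<alpha> \<and>
       (\<forall>i j k. distinct [i, j, k] \<and> {i, j, k} \<in> R \<longrightarrow> orbit_sum \<alpha> \<beta> H x y i j k = 0)"
  have "invariant2 pact \<alpha>" using A by (simp add: invariant_linear_def)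
  from main_gen[OF this beta(2) pact_add xy(1,2) H R] A
  show "\<forall>i j k. distinct [i, j, k] \<longrightarrow> orbit_sum \<alpha> \<beta> (centralizer g) x y i j k = 0" by blast
next
  fix \<alpha> :: "('n \<Rightarrow> 'n) \<Rightarrow> complex^'n \<Rightarrow> complex^'n \<Rightarrow> complex"
  assume A: "const_cochain \<alpha> \<and> invariant_const \<alpha> \<and>
       (\<forall>i j k. distinct [i, j, k] \<and> {i, j, k} \<in> R \<longrightarrow> orbit_sum \<alpha> \<beta> H x y i j k = 0)"
  have "invariant2 (\<lambda>h z. z) \<alpha>" using A by (simp add: invariant_const_def)
  moreover have "\<And>t a b. t \<in> Sn \<Longrightarrow> (\<lambda>h z. z) t (a + b) = (\<lambda>h (z::complex). z) t a + (\<lambda>h z. z) t b"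
    by simp
  ultimately have M: "\<forall>i j k. distinct [i, j, k] \<and> {i, j, k} \<in> R \<longrightarrow> orbit_sum \<alpha> \<beta> H x y i j k = 0
     \<Longrightarrow> \<forall>i j k. distinct [i, j, k] \<longrightarrow> orbit_sum \<alpha> \<beta> (centralizer g) x y i j k = 0"
    using main_gen[OF _ beta(2) _ xy(1,2) H R] by blast
  from M A
  show "\<forall>i j k. distinct [i, j, k] \<longrightarrow> orbit_sum \<alpha> \<beta> (centralizer g) x y i j k = 0" by blast
qed

end
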